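(* Let $k_1<k_2<\cdots<k_n$ be positive integers and let $s_1$ be any positive integer. Then there exist a $\delta$-set $\Sigma=\{s_1<s_2<\cdots<s_l\}$ (whose minimum is the prescribed $s_1$) and indices $1\le j_1<j_2<\cdots<j_n<l-1$ such that $s_{j_i+1}-s_{j_i}=k_i$ for every $i=1,\ldots,n$.
   Context: All graphs are finite and simple; $d(u,v)$ denotes the usual graph distance. For a set $J$ of nonnegative integers, a distance $J$-labeling of $G$ is a function $f:V(G)\to J$ with $f(V(G))=J$ such that whenever two distinct vertices $u,v$ satisfy $f(u)=f(v)=k$, we have $d(u,v)=k$. It is proper if every $k\in J\setminus\{0\}$ is the label of at least two vertices. A finite set $\Sigma$ of nonnegative integers is a $\delta$-set if there exists a graph admitting a proper distance $\Sigma$-labeling. *)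

theory Defs
  imports Main "HOL-Library.Extended_Nat"
begin

definition simple_graph :: "'a set \<Rightarrow> ('a \<Rightarrow> 'a \<Rightarrow> bool) \<Rightarrow> bool" where
  "simple_graph V E \<longleftrightarrow> finite V \<and> (\<forall>u v. E u v \<longrightarrow> u \<in> V \<and> v \<in> V)
     \<and> (\<forall>u v. E u v \<longrightarrow> E v u) \<and> (\<forall>u. \<not> E u u)"

fun walk_len :: "('a \<Rightarrow> 'a \<Rightarrow> bool) \<Rightarrow> nat \<Rightarrow> 'a \<Rightarrow> 'a \<Rightarrow> bool" where
  "walk_len E 0 u v \<longleftrightarrow> u = v"
| "walk_len E (Suc n) u v \<longleftrightarrow> (\<exists>w. E u w \<and> walk_len E n w v)"

definition gdist :: "('a \<Rightarrow> 'a \<Rightarrow> bool) \<Rightarrow> 'a \<Rightarrow> 'a \<Rightarrow> enat" where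
  "gdist E u v = (if \<exists>n. walk_len E n u v then enat (LEAST n. walk_len E n u v) else \<infinity>)"

definition distance_labeling ::
  "'a set \<Rightarrow> ('a \<Rightarrow> 'a \<Rightarrow> bool) \<Rightarrow> nat set \<Rightarrow> ('a \<Rightarrow> nat) \<Rightarrow> bool" where
  "distance_labeling V E J f \<longleftrightarrow> f ` V = J \<and>
     (\<forall>u\<in>V. \<forall>v\<in>V. u \<noteq> v \<and> f u = f v \<longrightarrow> gdist E u v = enat (f u))"

definition proper_distance_labeling ::
  "'a set \<Rightarrow> ('a \<Rightarrow> 'a \<Rightarrow> bool) \<Rightarrow> nat set \<Rightarrow> ('a \<Rightarrow> nat) \<Rightarrow> bool" where
  "proper_distance_labeling V E J f \<longleftrightarrow> distance_labeling V E J f \<and>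
     (\<forall>k \<in> J - {0}. \<exists>u\<in>V. \<exists>v\<in>V. u \<noteq> v \<and> f u = k \<and> f v = k)"

text \<open>Graphs are taken on vertex sets of naturals (every finite graph has an isomorphic copy).\<close>
definition delta_set :: "nat set \<Rightarrow> bool" where
  "delta_set \<Sigma> \<longleftrightarrow> finite \<Sigma> \<and>
     (\<exists>(V::nat set) E f. simple_graph V E \<and> proper_distance_labeling V E \<Sigma> f)"

end

theory Submission
  imports Defs
begin


definition gl :: "nat \<Rightarrow> nat \<Rightarrow> nat" where
  "gl d p = (if p < d then p + 2*d - 1 else if p < 2*d - 1 then p
             else if even p then p div 2 else (p + 2*d - 1) div 2)"

lemma gl_range: "0 < d \<Longrightarrow> p < 4*d - 2 \<Longrightarrow> d \<le> gl d p \<and> gl d p \<le> 3*d - 2"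
  unfolding gl_def by (auto elim!: evenE oddE)

lemma gl_pair: "0 < d \<Longrightarrow> q < 4*d - 2 \<Longrightarrow> p < q \<Longrightarrow> gl d p = gl d q \<Longrightarrow> q - p = gl d p"
  unfolding gl_def by (auto elim!: evenE oddE split: if_splits)

lemma gl_surj: "0 < d \<Longrightarrow> d \<le> x \<Longrightarrow> x \<le> 3*d - 2 \<Longrightarrow> \<exists>p q. p < q \<and> q < 4*d - 2 \<and> gl d p = x \<and> gl d q = x"
proof (cases "x \<le> 2*d - 2")
  case True
  assume a: "0<d" "d \<le> x" "x \<le> 3*d - 2"
  show ?thesis
    by (rule exI[of _ x], rule exI[of _ "2*x"]) (use a True in \<open>auto simp: gl_def\<close>)
next
  case False
  assume a: "0<d" "d \<le> x" "x \<le> 3*d - 2"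
  show ?thesis
    by (rule exI[of _ "x - (2*d-1)"], rule exI[of _ "2*x - (2*d-1)"]) (use a False in \<open>auto simp: gl_def\<close>)
qed

definition pE :: "nat set \<Rightarrow> nat \<Rightarrow> nat \<Rightarrow> bool" where
  "pE V u v \<longleftrightarrow> u \<in> V \<and> v \<in> V \<and> (u = Suc v \<or> v = Suc u)"

lemma walk_bound: "walk_len (pE V) n u v \<Longrightarrow> nat \<bar>int u - int v\<bar> \<le> n"
proof (induction n arbitrary: u)
  case 0 then show ?case by simp
next
  case (Suc n)
  then obtain w where "pE V u w" "walk_len (pE V) n w v" by auto
  with Suc.IH[of w] show ?case unfolding pE_def by auto
qed

lemma walk_up: "{u..u+m} \<subseteq> V \<Longrightarrow> walk_len (pE V) m u (u+m)"
proof (induction m arbitrary: u)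
  case 0 then show ?case by simp
next
  case (Suc m)
  have "{Suc u..Suc u + m} \<subseteq> V" using Suc.prems by auto
  then have "walk_len (pE V) m (Suc u) (Suc u + m)" by (rule Suc.IH)
  moreover have "pE V u (Suc u)" using Suc.prems unfolding pE_def by auto
  ultimately show ?case by auto
qed

lemma walk_down: "{u..u+m} \<subseteq> V \<Longrightarrow> walk_len (pE V) m (u+m) u"
proof (induction m)
  case 0 then show ?case by simp
next
  case (Suc m)
  have "{u..u + m} \<subseteq> V" using Suc.prems by auto
  then have "walk_len (pE V) m (u + m) u" by (rule Suc.IH)
  moreover have "pE V (u + Suc m) (u + m)" using Suc.prems unfolding pE_def by auto
  ultimately show ?case by auto
qed

lemma gdist_path:
  assumes "{min u v..max u v} \<subseteq> V"
  shows "gdist (pE V) u v = enat (nat \<bar>int u - int v\<bar>)"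
proof -
  have w: "walk_len (pE V) (nat \<bar>int u - int v\<bar>) u v"
  proof (cases "u \<le> v")
    case True
    then show ?thesis using walk_up[of u "v - u" V] assms by (simp add: nat_diff_distrib)
  next
    case False
    then have e: "nat \<bar>int u - int v\<bar> = u - v" by simp
    show ?thesis unfolding e using walk_down[of v "u - v" V] assms False by (simp add: max_def min_def)
  qed
  have "(LEAST n. walk_len (pE V) n u v) = nat \<bar>int u - int v\<bar>"
    by (rule Least_equality) (use w walk_bound in auto)
  then show ?thesis using w unfolding gdist_def by auto
qed



fun dd :: "(nat \<Rightarrow> nat) \<Rightarrow> nat \<Rightarrow> nat \<Rightarrow> nat" where
  "dd k s1 0 = s1"
| "dd k s1 (Suc b) = 3 * dd k s1 b - 2 + k (Suc b)"

fun offs :: "(nat \<Rightarrow> nat) \<Rightarrow> nat \<Rightarrow> nat \<Rightarrow> nat" where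
  "offs k s1 0 = 0"
| "offs k s1 (Suc b) = offs k s1 b + (4 * dd k s1 b - 1)"

definition Sig :: "(nat \<Rightarrow> nat) \<Rightarrow> nat \<Rightarrow> nat \<Rightarrow> nat set" where
  "Sig k s1 n = (\<Union>b\<in>{..n}. {dd k s1 b .. 3 * dd k s1 b - 2})"

definition VV :: "(nat \<Rightarrow> nat) \<Rightarrow> nat \<Rightarrow> nat \<Rightarrow> nat set" where
  "VV k s1 n = (\<Union>b\<in>{..n}. {offs k s1 b .. offs k s1 b + (4 * dd k s1 b - 3)})"

definition blk :: "(nat \<Rightarrow> nat) \<Rightarrow> nat \<Rightarrow> nat \<Rightarrow> nat" where
  "blk k s1 x = (LEAST b. x < offs k s1 (Suc b))"

definition ff :: "(nat \<Rightarrow> nat) \<Rightarrow> nat \<Rightarrow> nat \<Rightarrow> nat" where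
  "ff k s1 x = gl (dd k s1 (blk k s1 x)) (x - offs k s1 (blk k s1 x))"

lemma dd_pos: "0 < s1 \<Longrightarrow> 0 < dd k s1 b"
  by (induction b) auto

lemma dd_step: "0 < s1 \<Longrightarrow> dd k s1 b \<le> dd k s1 (Suc b)"
  using dd_pos[of s1 k b] by auto

lemma dd_mono: "0 < s1 \<Longrightarrow> b \<le> b' \<Longrightarrow> dd k s1 b \<le> dd k s1 b'"
  using dd_step[of s1 k] by (rule lift_Suc_mono_le)

lemma dd_gap: assumes "0 < s1" "\<forall>i\<in>{1..n}. 0 < k i" "b < b'" "b' \<le> n"
  shows "3 * dd k s1 b - 2 < dd k s1 b'"
proof -
  have "3 * dd k s1 b - 2 < dd k s1 (Suc b)" using assms by auto
  also have "\<dots> \<le> dd k s1 b'" using dd_mono[of s1 "Suc b" b' k] assms by (simp del: dd.simps)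
  finally show ?thesis .
qed

lemma offs_mono: "b \<le> b' \<Longrightarrow> offs k s1 b \<le> offs k s1 b'"
  by (rule lift_Suc_mono_le[of "offs k s1"]) auto

lemma blk_eq: assumes "0 < s1" "offs k s1 b \<le> x" "x \<le> offs k s1 b + (4 * dd k s1 b - 3)"
  shows "blk k s1 x = b"
  unfolding blk_def
proof (rule Least_equality)
  show "x < offs k s1 (Suc b)" using assms dd_pos[of s1 k b] by auto
next
  fix c assume "x < offs k s1 (Suc c)"
  then show "b \<le> c" using offs_mono[of "Suc c" b k s1] assms(2) by (cases "b \<le> c") auto
qed

lemma ff_eq: assumes "0 < s1" "p < 4 * dd k s1 b - 2"
  shows "ff k s1 (offs k s1 b + p) = gl (dd k s1 b) p"
  using blk_eq[of s1 k b "offs k s1 b + p"] assms unfolding ff_def by auto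

lemma VV_cases: assumes "x \<in> VV k s1 n" "0 < s1"
  shows "\<exists>b p. b \<le> n \<and> p < 4 * dd k s1 b - 2 \<and> x = offs k s1 b + p"
proof -
  obtain b where b: "b \<le> n" "offs k s1 b \<le> x" "x \<le> offs k s1 b + (4 * dd k s1 b - 3)"
    using assms(1) unfolding VV_def by auto
  have "0 < dd k s1 b" using dd_pos assms(2) by auto
  then show ?thesis using b by (intro exI[of _ b] exI[of _ "x - offs k s1 b"]) auto
qed



lemma Sig_delta:
  assumes kpos: "\<forall>i\<in>{1..n}. 0 < k i" and s1: "0 < s1"
  shows "delta_set (Sig k s1 n)"
proof -
  let ?V = "VV k s1 n" and ?E = "pE (VV k s1 n)" and ?f = "ff k s1" and ?S = "Sig k s1 n"
  have fin: "finite ?S" unfolding Sig_def by auto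
  have sg: "simple_graph ?V ?E" unfolding simple_graph_def pE_def VV_def by auto
  have lab: "?f (offs k s1 b + p) \<in> {dd k s1 b .. 3 * dd k s1 b - 2}"
    if "p < 4 * dd k s1 b - 2" for b p
    using ff_eq[OF s1 that] gl_range[OF dd_pos[OF s1] that] by auto
  have inV: "offs k s1 b + p \<in> ?V" if "b \<le> n" "p < 4 * dd k s1 b - 2" for b p
    using that unfolding VV_def by force
  have img: "?f ` ?V = ?S"
  proof
    show "?f ` ?V \<subseteq> ?S"
    proof
      fix y assume "y \<in> ?f ` ?V"
      then obtain x where x: "x \<in> ?V" "y = ?f x" by auto
      obtain b p where "b \<le> n" "p < 4 * dd k s1 b - 2" "x = offs k s1 b + p"
        using VV_cases[OF x(1) s1] by auto
      then show "y \<in> ?S" using lab x unfolding Sig_def by blast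
    qed
  next
    show "?S \<subseteq> ?f ` ?V"
    proof
      fix y assume "y \<in> ?S"
      then obtain b where b: "b \<le> n" "dd k s1 b \<le> y" "y \<le> 3 * dd k s1 b - 2" unfolding Sig_def by auto
      obtain p q where pq: "p < q" "q < 4 * dd k s1 b - 2" "gl (dd k s1 b) p = y"
        using gl_surj[OF dd_pos[OF s1] b(2,3)] by auto
      have "?f (offs k s1 b + p) = y" using ff_eq[OF s1, where p=p and b=b] pq by auto
      then show "y \<in> ?f ` ?V" using inV[OF b(1), of p] pq by force
    qed
  qed
  have cond: "gdist ?E u v = enat (?f u)" if uv: "u \<in> ?V" "v \<in> ?V" "u \<noteq> v" "?f u = ?f v" for u v
  proof -
    obtain b p where bp: "b \<le> n" "p < 4 * dd k s1 b - 2" "u = offs k s1 b + p"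
      using VV_cases[OF uv(1) s1] by auto
    obtain b' p' where bp': "b' \<le> n" "p' < 4 * dd k s1 b' - 2" "v = offs k s1 b' + p'"
      using VV_cases[OF uv(2) s1] by auto
    have l1: "?f u \<in> {dd k s1 b .. 3 * dd k s1 b - 2}" using lab bp by auto
    have l2: "?f v \<in> {dd k s1 b' .. 3 * dd k s1 b' - 2}" using lab bp' by auto
    have bb: "b = b'"
    proof (rule ccontr)
      assume "b \<noteq> b'"
      then consider "b < b'" | "b' < b" by linarith
      then show False
      proof cases
        case 1 then show False using dd_gap[OF s1 kpos 1 bp'(1)] l1 l2 uv(4) by auto
      next
        case 2 then show False using dd_gap[OF s1 kpos 2 bp(1)] l1 l2 uv(4) by auto
      qed
    qed
    have fu: "?f u = gl (dd k s1 b) p" using ff_eq[OF s1 bp(2)] bp(3) by simp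
    have fv: "?f v = gl (dd k s1 b) p'" using ff_eq[OF s1 bp'(2)] bp'(3) bb by simp
    have pp: "p \<noteq> p'" using uv(3) bp bp' bb by auto
    have dist: "nat \<bar>int p - int p'\<bar> = gl (dd k s1 b) p"
    proof (cases "p < p'")
      case True
      then have "p' - p = gl (dd k s1 b) p"
        using gl_pair[OF dd_pos[OF s1] _ True] bp' bb fu fv uv(4) by auto
      then show ?thesis using True by simp
    next
      case False
      then have lt: "p' < p" using pp by auto
      then have "p - p' = gl (dd k s1 b) p'"
        using gl_pair[OF dd_pos[OF s1] _ lt] bp fu fv uv(4) by auto
      then show ?thesis using lt fu fv uv(4) by simp
    qed
    have sub: "{min u v..max u v} \<subseteq> ?V"
    proof
      fix x assume "x \<in> {min u v..max u v}"
      then have "offs k s1 b \<le> x" "x \<le> offs k s1 b + (4 * dd k s1 b - 3)"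
        using bp bp' bb by auto
      then show "x \<in> ?V" using bp(1) unfolding VV_def by auto
    qed
    have "nat \<bar>int u - int v\<bar> = nat \<bar>int p - int p'\<bar>" using bp bp' bb by simp
    then show ?thesis using gdist_path[OF sub] dist fu by simp
  qed
  have prp: "\<exists>u\<in>?V. \<exists>v\<in>?V. u \<noteq> v \<and> ?f u = y \<and> ?f v = y" if yS: "y \<in> ?S" for y
  proof -
    obtain b where b: "b \<le> n" "dd k s1 b \<le> y" "y \<le> 3 * dd k s1 b - 2" using yS unfolding Sig_def by auto
    obtain p q where pq: "p < q" "q < 4 * dd k s1 b - 2" "gl (dd k s1 b) p = y" "gl (dd k s1 b) q = y"
      using gl_surj[OF dd_pos[OF s1] b(2,3)] by auto
    show ?thesis
      using ff_eq[OF s1, where p=p and b=b] ff_eq[OF s1, where p=q and b=b] pq inV[OF b(1), of p] inV[OF b(1), of q]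
      by (intro bexI[of _ "offs k s1 b + p"] bexI[of _ "offs k s1 b + q"]) auto
  qed
  show ?thesis unfolding delta_set_def proper_distance_labeling_def distance_labeling_def
    using fin sg img cond prp by blast
qed



lemma enum_props:
  fixes A :: "nat set"
  assumes "finite A"
  defines "s \<equiv> (\<lambda>i. sorted_list_of_set A ! (i - 1))"
  shows "strict_mono_on {1..card A} s" "s ` {1..card A} = A"
proof -
  let ?xs = "sorted_list_of_set A"
  have len: "length ?xs = card A" by simp
  have sw: "sorted_wrt (<) ?xs" by simp
  show "strict_mono_on {1..card A} s"
    unfolding strict_mono_on_def s_def
  proof (intro allI impI)
    fix a b assume "a \<in> {1..card A} \<and> b \<in> {1..card A} \<and> a < b"
    then show "?xs ! (a - 1) < ?xs ! (b - 1)"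
      using sorted_wrt_nth_less[OF sw, of "a - 1" "b - 1"] len by auto
  qed
  have "s ` {1..card A} = (\<lambda>i. ?xs ! i) ` {..<length ?xs}"
  proof -
    have "{1..card A} = Suc ` {..<card A}" by (simp add: image_Suc_lessThan)
    then show ?thesis unfolding s_def len by (simp add: image_image)
  qed
  also have "\<dots> = set ?xs" by (auto simp: in_set_conv_nth)
  also have "\<dots> = A" using assms by simp
  finally show "s ` {1..card A} = A" .
qed

lemma consec:
  fixes s :: "nat \<Rightarrow> nat"
  assumes sm: "strict_mono_on {1..l} s" and im: "s ` {1..l} = A"
    and t: "t \<in> {1..l}" "s t = a" and b: "b \<in> A" "a < b"
    and nb: "\<forall>c\<in>A. \<not> (a < c \<and> c < b)"
  shows "t + 1 \<le> l \<and> s (t + 1) = b"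
proof -
  obtain t' where t': "t' \<in> {1..l}" "s t' = b" using b im by auto
  have "t < t'"
  proof (rule ccontr)
    assume "\<not> t < t'"
    then have "t' \<le> t" by simp
    then have "s t' \<le> s t" using sm t t' by (metis strict_mono_on_leD)
    then show False using t t' b by auto
  qed
  then have tl: "t + 1 \<le> l" using t' by auto
  have "t + 1 \<in> {1..l}" using tl by auto
  then have "s (t+1) \<in> A" "a < s (t+1)" "s (t+1) \<le> b"
    using im sm t t' \<open>t < t'\<close> strict_mono_onD[OF sm, of t "t+1"] strict_mono_on_leD[OF sm, of "t+1" t']
    by auto
  then show ?thesis using tl nb by force
qed



theorem mainTheorem9:
  fixes k :: "nat \<Rightarrow> nat" and n :: nat and s1 :: nat
  assumes kpos: "\<forall>i\<in>{1..n}. 0 < k i"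
    and kinc: "strict_mono_on {1..n} k"
    and s1pos: "0 < s1"
  shows "\<exists>\<Sigma> (s :: nat \<Rightarrow> nat) (l :: nat) (j :: nat \<Rightarrow> nat).
           delta_set \<Sigma> \<and> strict_mono_on {1..l} s \<and> \<Sigma> = s ` {1..l} \<and> s 1 = s1 \<and>
           strict_mono_on {1..n} j \<and> (\<forall>i\<in>{1..n}. 1 \<le> j i \<and> j i < l - 1) \<and>
           (\<forall>i\<in>{1..n}. s (j i + 1) - s (j i) = k i)"
proof -
  define S where "S = Sig k s1 n"
  define l where "l = card S"
  define s where "s = (\<lambda>i. sorted_list_of_set S ! (i - 1))"
  define e where "e = (\<lambda>b. 3 * dd k s1 b - 2)"
  have fin: "finite S" unfolding S_def Sig_def by auto
  have sm: "strict_mono_on {1..l} s" and im: "s ` {1..l} = S"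
    using enum_props[OF fin] unfolding l_def s_def by auto
  have del: "delta_set S" unfolding S_def using Sig_delta[OF kpos s1pos] .
  have inS: "x \<in> S" if "b \<le> n" "dd k s1 b \<le> x" "x \<le> e b" for b x
    using that unfolding S_def Sig_def e_def by auto
  have Scases: "\<exists>b\<le>n. dd k s1 b \<le> c \<and> c \<le> e b" if "c \<in> S" for c
    using that unfolding S_def Sig_def e_def by auto
  have dde: "dd k s1 b \<le> e b" for b using dd_pos[OF s1pos, of k b] unfolding e_def by auto
  have eS: "e b \<in> S" if "b \<le> n" for b using inS[OF that dde] by simp
  have dS: "dd k s1 b \<in> S" if "b \<le> n" for b using inS[OF that _ dde] by simp
  have gap: "e b < dd k s1 b'" if "b < b'" "b' \<le> n" for b b'
    using dd_gap[OF s1pos kpos that] unfolding e_def .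
  have ssame: "s t \<le> s t' \<Longrightarrow> t \<in> {1..l} \<Longrightarrow> t' \<in> {1..l} \<Longrightarrow> t \<le> t'" for t t'
    using strict_mono_onD[OF sm, of t' t] by (cases "t' < t") auto
  define j where "j = (\<lambda>i. SOME t. t \<in> {1..l} \<and> s t = e (i - 1))"
  have jprop: "j i \<in> {1..l} \<and> s (j i) = e (i - 1)" if "i \<in> {1..n}" for i
  proof -
    have "e (i - 1) \<in> S" using eS that by auto
    then have "\<exists>t. t \<in> {1..l} \<and> s t = e (i - 1)" using im by auto
    then show ?thesis unfolding j_def by (rule someI_ex)
  qed
  have nxt: "j i + 1 \<le> l \<and> s (j i + 1) = dd k s1 i" if i: "i \<in> {1..n}" for i
  proof (rule consec[OF sm im])
    show "j i \<in> {1..l}" "s (j i) = e (i - 1)" using jprop[OF i] by auto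
    show "dd k s1 i \<in> S" using dS i by auto
    show "e (i - 1) < dd k s1 i" using gap[of "i-1" i] i by auto
    show "\<forall>c\<in>S. \<not> (e (i - 1) < c \<and> c < dd k s1 i)"
    proof (intro ballI notI)
      fix c assume "c \<in> S" "e (i - 1) < c \<and> c < dd k s1 i"
      then obtain b where b: "b \<le> n" "dd k s1 b \<le> c" "c \<le> e b" using Scases by blast
      show False
      proof (cases "b < i")
        case True
        then have "dd k s1 b \<le> dd k s1 (i - 1)" using dd_mono[OF s1pos, of b "i-1" k] by auto
        then have "e b \<le> e (i - 1)" unfolding e_def by simp
        then show False using b \<open>e (i - 1) < c \<and> c < dd k s1 i\<close> by auto
      next
        case False
        then have "dd k s1 i \<le> dd k s1 b" using dd_mono[OF s1pos, of i b k] by auto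
        then show False using b \<open>e (i - 1) < c \<and> c < dd k s1 i\<close> by auto
      qed
    qed
  qed
  have diff: "s (j i + 1) - s (j i) = k i" if i: "i \<in> {1..n}" for i
  proof -
    have "i = Suc (i - 1)" using i by auto
    then have "dd k s1 i = e (i - 1) + k i" unfolding e_def by (metis dd.simps(2))
    then show ?thesis using nxt[OF i] jprop[OF i] by simp
  qed
  have jl: "1 \<le> j i \<and> j i < l - 1" if i: "i \<in> {1..n}" for i
  proof -
    have "e (i - 1) < dd k s1 i" using gap[of "i-1" i] i by auto
    then have "2 \<le> dd k s1 i" unfolding e_def using dd_pos[OF s1pos, of k "i-1"] by auto
    then have lt: "dd k s1 i < e i" unfolding e_def by auto
    obtain t where t: "t \<in> {1..l}" "s t = e i" using eS[of i] i im by force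
    have "j i + 1 \<in> {1..l}" using nxt[OF i] by auto
    then have "j i + 1 \<le> t" using ssame[of "j i + 1" t] nxt[OF i] lt t by auto
    moreover have "j i + 1 \<noteq> t" using nxt[OF i] lt t by auto
    ultimately show ?thesis using t jprop[OF i] by auto
  qed
  have jmono: "strict_mono_on {1..n} j"
  proof (rule strict_mono_onI)
    fix a b assume ab: "a \<in> {1..n}" "b \<in> {1..n}" "a < b"
    have "e (a - 1) < dd k s1 a" using gap[of "a-1" a] ab by auto
    also have "\<dots> \<le> dd k s1 (b - 1)" using dd_mono[OF s1pos, of a "b-1" k] ab by auto
    also have "\<dots> \<le> e (b - 1)" by (rule dde)
    finally have "s (j a) < s (j b)" using jprop[OF ab(1)] jprop[OF ab(2)] by simp
    then show "j a < j b" using strict_mono_on_leD[OF sm, of "j b" "j a"] jprop[OF ab(1)] jprop[OF ab(2)]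
      by (cases "j a < j b") auto
  qed
  have s1eq: "s 1 = s1"
  proof -
    have "s1 \<in> S" using dS[of 0] by simp
    then obtain t where t: "t \<in> {1..l}" "s t = s1" using im by force
    then have one: "1 \<in> {1..l}" by auto
    then have "s 1 \<le> s1" using t strict_mono_on_leD[OF sm one t(1)] by auto
    moreover have "s 1 \<in> S" using im one by auto
    then obtain b where "b \<le> n" "dd k s1 b \<le> s 1" using Scases by blast
    then have "s1 \<le> s 1" using dd_mono[OF s1pos, of 0 b k] by auto
    ultimately show ?thesis by simp
  qed
  show ?thesis
    using del sm im s1eq jmono jl diff by blast
qed

end
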